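(* The filter $\mathscr F^{\mathrm{1cas}}_{\rho}$ is a normal filter of subgroups of $\mathscr G^{\mathrm{1cas}}_{\rho}$ (i.e. it is closed under conjugation by elements of $\mathscr G^{\mathrm{1cas}}_{\rho}$).
   Context: $\rho:\omega_1\setminus\{0\}\to\omega_1$ is a regressive map, $\operatorname{Succ}_\rho(\xi)=\{\eta:\rho(\eta)=\xi\}$, $\operatorname{cl}_\rho(A)$ the least superset of $A$ closed under $\rho$. $\mathbb P_1=\operatorname{Fn}(\omega_1\times\omega\times\omega,2,{<}\omega)$. For $\xi<\omega_1$, $i<\omega$, $s\subseteq\omega$ finite or cofinite, $\tau^{\mathrm{1cas}}_{\xi,i,s}$ is the automorphism of $\mathbb P_1$ flipping the value of a condition at each coordinate $(\zeta,i,n)$ with $n\in s$ and $\zeta\in\{\xi\}\cup\operatorname{Succ}_\rho(\xi)$. $\mathscr G^{\mathrm{1cas}}_\rho$ is the group generated by these automorphisms. For $A\subseteq\omega_1$, $\operatorname{Fix}^{\mathrm{1cas}}_\rho(A)$ is the subgroup of elements acting trivially on all coordinates $(\zeta,j,n)$ with $\zeta\in\operatorname{cl}_\rho(A)$. $\mathscr F^{\mathrm{1cas}}_\rho$ is the filter of subgroups generated by the $\operatorname{Fix}^{\mathrm{1cas}}_\rho(A)$ for countable $A\subseteq\omega_1$. *)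

theory Defs
  imports Main "HOL-Library.Countable_Set" "HOL-Algebra.Bij" "HOL-Algebra.Generated_Groups"
begin

text \<open>omega_1 is modelled by a well-ordered type 'a which is uncountable while all its
  proper initial segments are countable (this characterises omega_1 up to isomorphism).
  Its least element plays the role of the ordinal 0.\<close>

definition is_omega1_type :: "'a::wellorder itself \<Rightarrow> bool" where
  "is_omega1_type _ \<longleftrightarrow> \<not> countable (UNIV :: 'a set) \<and> (\<forall>x::'a. countable {y. y < x})"

definition ord0 :: "'a::wellorder" where
  "ord0 = (LEAST x. True)"

definition regressive :: "('a::wellorder \<Rightarrow> 'a) \<Rightarrow> bool" where
  "regressive \<rho> \<longleftrightarrow> (\<forall>\<eta>. \<eta> \<noteq> ord0 \<longrightarrow> \<rho> \<eta> < \<eta>)"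

definition Succ :: "('a::wellorder \<Rightarrow> 'a) \<Rightarrow> 'a \<Rightarrow> 'a set" where
  "Succ \<rho> \<xi> = {\<eta>. \<eta> \<noteq> ord0 \<and> \<rho> \<eta> = \<xi>}"

inductive_set cl :: "('a::wellorder \<Rightarrow> 'a) \<Rightarrow> 'a set \<Rightarrow> 'a set" for \<rho> A where
  base: "\<xi> \<in> A \<Longrightarrow> \<xi> \<in> cl \<rho> A"
| step: "\<eta> \<in> cl \<rho> A \<Longrightarrow> \<eta> \<noteq> ord0 \<Longrightarrow> \<rho> \<eta> \<in> cl \<rho> A"

text \<open>Conditions of P_1 = Fn(omega_1 x omega x omega, 2, <omega): finite partial functions.\<close>
type_synonym 'a cond = "('a \<times> nat \<times> nat) \<Rightarrow> bool option"

definition P1 :: "'a cond set" where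
  "P1 = {p. finite (dom p)}"

definition tau :: "('a::wellorder \<Rightarrow> 'a) \<Rightarrow> 'a \<Rightarrow> nat \<Rightarrow> nat set \<Rightarrow> 'a cond \<Rightarrow> 'a cond" where
  "tau \<rho> \<xi> i s = (\<lambda>p \<in> P1. \<lambda>(\<zeta>, j, n).
      if j = i \<and> n \<in> s \<and> \<zeta> \<in> {\<xi>} \<union> Succ \<rho> \<xi> then map_option Not (p (\<zeta>, j, n)) else p (\<zeta>, j, n))"

definition gens :: "('a::wellorder \<Rightarrow> 'a) \<Rightarrow> ('a cond \<Rightarrow> 'a cond) set" where
  "gens \<rho> = {tau \<rho> \<xi> i s | \<xi> i s. finite s \<or> finite (- s)}"

text \<open>G^1cas_rho: the subgroup of the automorphism (bijection) group of P_1 generated by the taus.\<close>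
definition Gcas :: "('a::wellorder \<Rightarrow> 'a) \<Rightarrow> ('a cond \<Rightarrow> 'a cond) monoid" where
  "Gcas \<rho> = (BijGroup P1) \<lparr>carrier := generate (BijGroup P1) (gens \<rho>)\<rparr>"

definition Fix :: "('a::wellorder \<Rightarrow> 'a) \<Rightarrow> 'a set \<Rightarrow> ('a cond \<Rightarrow> 'a cond) set" where
  "Fix \<rho> A = {g \<in> carrier (Gcas \<rho>). \<forall>p \<in> P1. \<forall>\<zeta> \<in> cl \<rho> A. \<forall>j n. g p (\<zeta>, j, n) = p (\<zeta>, j, n)}"

definition Fcas :: "('a::wellorder \<Rightarrow> 'a) \<Rightarrow> ('a cond \<Rightarrow> 'a cond) set set" where
  "Fcas \<rho> = {H. subgroup H (Gcas \<rho>) \<and>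
     (\<exists>\<A>. finite \<A> \<and> (\<forall>A \<in> \<A>. countable A) \<and> carrier (Gcas \<rho>) \<inter> \<Inter> (Fix \<rho> ` \<A>) \<subseteq> H)}"

definition normal_filter :: "('g, 'b) monoid_scheme \<Rightarrow> 'g set set \<Rightarrow> bool" where
  "normal_filter G F \<longleftrightarrow>
     (\<forall>H \<in> F. subgroup H G) \<and> carrier G \<in> F \<and>
     (\<forall>H \<in> F. \<forall>K \<in> F. H \<inter> K \<in> F) \<and>
     (\<forall>H \<in> F. \<forall>K. subgroup K G \<and> H \<subseteq> K \<longrightarrow> K \<in> F) \<and>
     (\<forall>g \<in> carrier G. \<forall>H \<in> F. {g \<otimes>\<^bsub>G\<^esub> h \<otimes>\<^bsub>G\<^esub> inv\<^bsub>G\<^esub> g | h. h \<in> H} \<in> F)"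

end

theory Submission
  imports Defs
begin

definition flip :: "('a \<times> nat \<times> nat) set \<Rightarrow> 'a cond \<Rightarrow> 'a cond" where
  "flip S = (\<lambda>p \<in> P1. \<lambda>x. if x \<in> S then map_option Not (p x) else p x)"

lemma flip_P1: "p \<in> P1 \<Longrightarrow> flip S p \<in> P1"
proof -
  assume "p \<in> P1"
  moreover have "dom (flip S p) = dom p" using \<open>p \<in> P1\<close>
    by (auto simp: flip_def dom_def)
  ultimately show ?thesis by (simp add: P1_def)
qed

lemma flip_apply: "p \<in> P1 \<Longrightarrow> flip S p = (\<lambda>x. if x \<in> S then map_option Not (p x) else p x)"
  by (simp add: flip_def)

lemma flip_flip: "p \<in> P1 \<Longrightarrow> flip S (flip S p) = p"
  using flip_P1[of p S] by (auto simp: flip_def option.map_comp o_def option.map_ident)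

lemma flip_Bij: "flip S \<in> Bij P1"
  unfolding Bij_def
proof
  show "flip S \<in> extensional P1" by (simp add: flip_def)
  have "bij_betw (flip S) P1 P1"
    by (rule bij_betw_byWitness[where f'="flip S"]) (auto simp: flip_P1 flip_flip)
  then show "flip S \<in> {f. bij_betw f P1 P1}" by simp
qed

lemma flip_mult: "flip S \<otimes>\<^bsub>BijGroup P1\<^esub> flip T = flip ((S - T) \<union> (T - S))"
proof (rule ext)
  fix p
  show "(flip S \<otimes>\<^bsub>BijGroup P1\<^esub> flip T) p = flip ((S - T) \<union> (T - S)) p"
  proof (cases "p \<in> P1")
    case True
    have q: "flip T p \<in> P1" using flip_P1 True .
    have e1: "flip T p = (\<lambda>x. if x \<in> T then map_option Not (p x) else p x)"
      using True by (simp add: flip_def)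
    note e2 = flip_apply[OF q, of S]
    have e3: "flip ((S - T) \<union> (T - S)) p = (\<lambda>x. if x \<in> (S - T) \<union> (T - S) then map_option Not (p x) else p x)"
      using True by (simp add: flip_def)
    have "(flip S \<otimes>\<^bsub>BijGroup P1\<^esub> flip T) p = flip S (flip T p)"
      using True flip_Bij[of S] flip_Bij[of T] by (simp add: BijGroup_def compose_def)
    also have "\<dots> = flip ((S - T) \<union> (T - S)) p"
      unfolding e2 e3 unfolding e1 by (auto simp: option.map_comp o_def option.map_ident)
    finally show ?thesis .
  next
    case False
    then show ?thesis
      using flip_Bij[of S] flip_Bij[of T] by (simp add: BijGroup_def compose_def flip_def)
  qed
qed

lemma flip_one: "\<one>\<^bsub>BijGroup P1\<^esub> = flip {}"
  by (auto simp: BijGroup_def flip_def intro!: ext)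

lemma flip_inv: "inv\<^bsub>BijGroup P1\<^esub> (flip S) = flip S"
proof -
  have "flip S \<otimes>\<^bsub>BijGroup P1\<^esub> flip S = \<one>\<^bsub>BijGroup P1\<^esub>"
    by (simp add: flip_mult flip_one)
  then show ?thesis
    by (intro group.inv_equality[OF group_BijGroup]) (simp_all add: BijGroup_def flip_Bij)
qed

lemma tau_flip: "tau \<rho> \<xi> i s = flip {(\<zeta>, j, n). j = i \<and> n \<in> s \<and> \<zeta> \<in> {\<xi>} \<union> Succ \<rho> \<xi>}"
  unfolding tau_def flip_def by (auto intro!: ext)

lemma gen_flip:
  assumes "g \<in> generate (BijGroup P1) (gens \<rho>)"
  shows "\<exists>S. g = flip S"
  using assms
proof induction
  case one then show ?case using flip_one by blast
next
  case (incl h) then show ?case by (auto simp: gens_def tau_flip)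
next
  case (inv h) then show ?case by (auto simp: gens_def tau_flip flip_inv)
next
  case (eng h1 h2)
  from eng.IH obtain S1 S2 where "h1 = flip S1" "h2 = flip S2" by blast
  then show ?case by (auto simp: flip_mult)
qed

lemma gens_sub: "gens \<rho> \<subseteq> carrier (BijGroup P1)"
  by (auto simp: gens_def tau_flip BijGroup_def flip_Bij)

lemma sub_gen: "subgroup (generate (BijGroup P1) (gens \<rho>)) (BijGroup P1)"
  by (rule group.generate_is_subgroup[OF group_BijGroup gens_sub])

lemma group_Gcas: "group (Gcas \<rho>)"
  unfolding Gcas_def by (rule group.subgroup_imp_group[OF group_BijGroup sub_gen])

lemma Gcas_simps: "carrier (Gcas \<rho>) = generate (BijGroup P1) (gens \<rho>)"
  "mult (Gcas \<rho>) = mult (BijGroup P1)"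
  by (simp_all add: Gcas_def)

lemma inv_Gcas: "g \<in> carrier (Gcas \<rho>) \<Longrightarrow> inv\<^bsub>Gcas \<rho>\<^esub> g = inv\<^bsub>BijGroup P1\<^esub> g"
  unfolding Gcas_def
  by (rule group.m_inv_consistent[OF group_BijGroup sub_gen]) (simp)

lemma conj_eq:
  assumes "g \<in> carrier (Gcas \<rho>)" "h \<in> carrier (Gcas \<rho>)"
  shows "g \<otimes>\<^bsub>Gcas \<rho>\<^esub> h \<otimes>\<^bsub>Gcas \<rho>\<^esub> inv\<^bsub>Gcas \<rho>\<^esub> g = h"
proof -
  obtain S where S: "g = flip S" using gen_flip assms(1) Gcas_simps by blast
  obtain T where T: "h = flip T" using gen_flip assms(2) Gcas_simps by blast
  have "flip S \<otimes>\<^bsub>BijGroup P1\<^esub> flip T \<otimes>\<^bsub>BijGroup P1\<^esub> flip S = flip T"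
    by (simp add: flip_mult) (rule arg_cong[where f=flip], blast)
  then show ?thesis using assms(1)
    by (simp add: inv_Gcas S T flip_inv Gcas_simps)
qed

theorem proposition2p8:
  fixes \<rho> :: "'a::wellorder \<Rightarrow> 'a"
  assumes "is_omega1_type TYPE('a)"
    and "regressive \<rho>"
  shows "normal_filter (Gcas \<rho>) (Fcas \<rho>)"
proof -
  interpret G: group "Gcas \<rho>" by (rule group_Gcas)
  have 1: "\<forall>H \<in> Fcas \<rho>. subgroup H (Gcas \<rho>)" by (simp add: Fcas_def)
  have 2: "carrier (Gcas \<rho>) \<in> Fcas \<rho>"
  proof -
    have "subgroup (carrier (Gcas \<rho>)) (Gcas \<rho>)" by (rule G.subgroup_self)
    moreover have "finite ({} :: 'a set set)" by simp
    ultimately show ?thesis unfolding Fcas_def mem_Collect_eq by blast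
  qed
  have 3: "H \<inter> K \<in> Fcas \<rho>" if "H \<in> Fcas \<rho>" "K \<in> Fcas \<rho>" for H K
  proof -
    from that obtain A B where A: "finite A" "\<forall>X \<in> A. countable X"
        "carrier (Gcas \<rho>) \<inter> \<Inter> (Fix \<rho> ` A) \<subseteq> H"
      and B: "finite B" "\<forall>X \<in> B. countable X"
        "carrier (Gcas \<rho>) \<inter> \<Inter> (Fix \<rho> ` B) \<subseteq> K"
      and sH: "subgroup H (Gcas \<rho>)" and sK: "subgroup K (Gcas \<rho>)"
      unfolding Fcas_def mem_Collect_eq by blast
    have "subgroup (H \<inter> K) (Gcas \<rho>)" by (rule G.subgroups_Inter_pair[OF sH sK])
    moreover have "finite (A \<union> B)" using A B by simp
    moreover have "\<forall>X \<in> A \<union> B. countable X" using A B by blast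
    moreover have "carrier (Gcas \<rho>) \<inter> \<Inter> (Fix \<rho> ` (A \<union> B)) \<subseteq> H \<inter> K"
      using A(3) B(3) by blast
    ultimately show ?thesis unfolding Fcas_def mem_Collect_eq by blast
  qed
  have 4: "K \<in> Fcas \<rho>" if "H \<in> Fcas \<rho>" "subgroup K (Gcas \<rho>)" "H \<subseteq> K" for H K
    using that unfolding Fcas_def mem_Collect_eq by (meson subset_trans)
  have 5: "{g \<otimes>\<^bsub>Gcas \<rho>\<^esub> h \<otimes>\<^bsub>Gcas \<rho>\<^esub> inv\<^bsub>Gcas \<rho>\<^esub> g | h. h \<in> H} \<in> Fcas \<rho>"
    if "g \<in> carrier (Gcas \<rho>)" "H \<in> Fcas \<rho>" for g H
  proof -
    have sub: "H \<subseteq> carrier (Gcas \<rho>)" using that(2) 1 subgroup.subset by blast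
    have "{g \<otimes>\<^bsub>Gcas \<rho>\<^esub> h \<otimes>\<^bsub>Gcas \<rho>\<^esub> inv\<^bsub>Gcas \<rho>\<^esub> g | h. h \<in> H} = H"
    proof (intro equalityI subsetI)
      fix x assume "x \<in> {g \<otimes>\<^bsub>Gcas \<rho>\<^esub> h \<otimes>\<^bsub>Gcas \<rho>\<^esub> inv\<^bsub>Gcas \<rho>\<^esub> g | h. h \<in> H}"
      then obtain h where "h \<in> H" "x = g \<otimes>\<^bsub>Gcas \<rho>\<^esub> h \<otimes>\<^bsub>Gcas \<rho>\<^esub> inv\<^bsub>Gcas \<rho>\<^esub> g" by blast
      moreover have "h \<in> carrier (Gcas \<rho>)" using sub \<open>h \<in> H\<close> by blast
      ultimately show "x \<in> H" using conj_eq[OF that(1)] by metis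
    next
      fix x assume "x \<in> H"
      then have "x \<in> carrier (Gcas \<rho>)" using sub by blast
      then have "x = g \<otimes>\<^bsub>Gcas \<rho>\<^esub> x \<otimes>\<^bsub>Gcas \<rho>\<^esub> inv\<^bsub>Gcas \<rho>\<^esub> g"
        using conj_eq[OF that(1)] by metis
      then show "x \<in> {g \<otimes>\<^bsub>Gcas \<rho>\<^esub> h \<otimes>\<^bsub>Gcas \<rho>\<^esub> inv\<^bsub>Gcas \<rho>\<^esub> g | h. h \<in> H}"
        using \<open>x \<in> H\<close> by blast
    qed
    then show ?thesis using that(2) by simp
  qed
  show ?thesis unfolding normal_filter_def
  proof (intro conjI)
    show "\<forall>H\<in>Fcas \<rho>. \<forall>K\<in>Fcas \<rho>. H \<inter> K \<in> Fcas \<rho>" using 3 by (intro ballI)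
    show "\<forall>H\<in>Fcas \<rho>. \<forall>K. subgroup K (Gcas \<rho>) \<and> H \<subseteq> K \<longrightarrow> K \<in> Fcas \<rho>"
      using 4 by (intro ballI allI impI) (elim conjE)
    show "\<forall>g\<in>carrier (Gcas \<rho>). \<forall>H\<in>Fcas \<rho>.
      {g \<otimes>\<^bsub>Gcas \<rho>\<^esub> h \<otimes>\<^bsub>Gcas \<rho>\<^esub> inv\<^bsub>Gcas \<rho>\<^esub> g | h. h \<in> H} \<in> Fcas \<rho>"
      using 5 by (intro ballI)
  qed (rule 1, rule 2)
qed

end
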